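(* Let $\alpha_f>0$ and $\mathcal{R}_f>0$ be arbitrary constants, and define functions on $[0,\infty)$ by $$\psi(r) := e^{-\alpha_f \min\{r^2,\mathcal{R}_f^2\}},\qquad \Psi(r):=\int_0^r\psi(s)\,ds,\qquad g(r):=1-\frac12\,\frac{\int_0^{\min\{r,\mathcal{R}_f\}}\frac{\Psi(s)}{\psi(s)}\,ds}{\int_0^{\mathcal{R}_f}\frac{\Psi(s)}{\psi(s)}\,ds},\qquad f(r):=\int_0^r\psi(s)g(s)\,ds.$$ Then: (F1) $f(0)=0$ and $f'(0)=1$. (F2) For all $r\ge 0$, $\frac12 e^{-\alpha_f\mathcal{R}_f^2}\le \frac12\psi(r)\le f'(r)\le 1$. (F3) For all $r\ge0$, $\frac12 e^{-\alpha_f\mathcal{R}_f^2}\, r\le \frac12\Psi(r)\le f(r)\le \Psi(r)\le r$. (F4) For all $0\le r\le \mathcal{R}_f$, $f''(r)+\alpha_f\, r f'(r)\le -\frac{e^{-\alpha_f\mathcal{R}_f^2}}{\mathcal{R}_f^2}\, f(r)$. (F5) For all $r\ge0$, $f''(r)\le 0$, and $f''(r)=0$ when $r>\mathcal{R}_f$. (F6) If $\alpha_f\mathcal{R}_f^2\ge \ln 2$, then for any $0<c<1$ and $r\ge 0$, $f(r)\le e^{-\frac{c\, e^{-\alpha_f\mathcal{R}_f^2}}{4}}\, f((1+c)r)$. *)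

theory Defs
  imports "HOL-Analysis.Analysis"
begin

definition psi :: "real \<Rightarrow> real \<Rightarrow> real \<Rightarrow> real" where
  "psi \<alpha> R r = exp (- \<alpha> * min (r\<^sup>2) (R\<^sup>2))"

definition Psi :: "real \<Rightarrow> real \<Rightarrow> real \<Rightarrow> real" where
  "Psi \<alpha> R r = integral {0..r} (psi \<alpha> R)"

definition gfun :: "real \<Rightarrow> real \<Rightarrow> real \<Rightarrow> real" where
  "gfun \<alpha> R r = 1 - (1/2) *
     (integral {0..min r R} (\<lambda>s. Psi \<alpha> R s / psi \<alpha> R s)
      / integral {0..R} (\<lambda>s. Psi \<alpha> R s / psi \<alpha> R s))"

definition ff :: "real \<Rightarrow> real \<Rightarrow> real \<Rightarrow> real" where
  "ff \<alpha> R r = integral {0..r} (\<lambda>s. psi \<alpha> R s * gfun \<alpha> R s)"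

end

theory Submission
  imports Defs
begin

lemma ftc0:
  fixes k :: "real \<Rightarrow> real"
  assumes "continuous_on {0..} k" "r \<ge> 0"
  shows "((\<lambda>x. integral {0..x} k) has_real_derivative k r) (at r within {0..})"
proof -
  have "((\<lambda>x. integral {0..x} k) has_real_derivative k r) (at r within {0..r+1})"
    by (rule integral_has_real_derivative) (auto intro: continuous_on_subset[OF assms(1)] simp: assms)
  moreover have "at r within {0..r+1} = at r within {0::real..}"
    by (rule at_within_nhd[where S="{..<r+1}"]) auto
  ultimately show ?thesis by simp
qed

lemma ftc0_cont:
  fixes k :: "real \<Rightarrow> real"
  assumes "continuous_on {0..} k"
  shows "continuous_on {0..} (\<lambda>x. integral {0..x} k)"
  by (rule DERIV_continuous_on[OF ftc0[OF assms]]) auto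

lemma int_id:
  fixes R :: real assumes "R \<ge> 0"
  shows "((\<lambda>s. s) has_integral R\<^sup>2/2) {0..R}"
proof -
  have "((\<lambda>s. s) has_integral ((\<lambda>x. x\<^sup>2/2) R - (\<lambda>x. x\<^sup>2/2) 0)) {0..R}"
    apply (rule fundamental_theorem_of_calculus)
    using assms apply simp
    apply (simp add: has_real_derivative_iff_has_vector_derivative[symmetric])
    apply (rule DERIV_subset[where s=UNIV])
     apply (auto intro!: derivative_eq_intros)
    done
  then show ?thesis by simp
qed

lemma int_mono_cont:
  fixes k1 k2 :: "real \<Rightarrow> real"
  assumes "continuous_on {a..b} k1" "continuous_on {a..b} k2" "\<And>x. x \<in> {a..b} \<Longrightarrow> k1 x \<le> k2 x"
  shows "integral {a..b} k1 \<le> integral {a..b} k2"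
  by (rule integral_le) (auto intro: integrable_continuous_interval assms)


theorem lemma2:
  fixes \<alpha> R :: real
  assumes "\<alpha> > 0" and "R > 0"
  shows "\<exists>f' f''.
    (\<forall>r\<ge>0. (ff \<alpha> R has_real_derivative f' r) (at r within {0..})) \<and>
    (\<forall>r\<ge>0. (f' has_real_derivative f'' r) (at r within (if r \<le> R then {0..R} else {R..}))) \<and>
    \<comment> \<open>F1\<close>
    ff \<alpha> R 0 = 0 \<and> f' 0 = 1 \<and>
    \<comment> \<open>F2\<close>
    (\<forall>r\<ge>0. (1/2) * exp (- \<alpha> * R\<^sup>2) \<le> (1/2) * psi \<alpha> R r \<and>
             (1/2) * psi \<alpha> R r \<le> f' r \<and> f' r \<le> 1) \<and>
    \<comment> \<open>F3\<close>
    (\<forall>r\<ge>0. (1/2) * exp (- \<alpha> * R\<^sup>2) * r \<le> (1/2) * Psi \<alpha> R r \<and>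
             (1/2) * Psi \<alpha> R r \<le> ff \<alpha> R r \<and> ff \<alpha> R r \<le> Psi \<alpha> R r \<and> Psi \<alpha> R r \<le> r) \<and>
    \<comment> \<open>F4\<close>
    (\<forall>r. 0 \<le> r \<and> r \<le> R \<longrightarrow>
        f'' r + \<alpha> * r * f' r \<le> - (exp (- \<alpha> * R\<^sup>2) / R\<^sup>2) * ff \<alpha> R r) \<and>
    \<comment> \<open>F5\<close>
    (\<forall>r\<ge>0. f'' r \<le> 0) \<and> (\<forall>r>R. f'' r = 0) \<and>
    \<comment> \<open>F6\<close>
    (\<alpha> * R\<^sup>2 \<ge> ln 2 \<longrightarrow>
       (\<forall>c r. 0 < c \<and> c < 1 \<and> 0 \<le> r \<longrightarrow>
          ff \<alpha> R r \<le> exp (- (c * exp (- \<alpha> * R\<^sup>2)) / 4) * ff \<alpha> R ((1 + c) * r)))"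
proof -
  note a = assms(1)
  note Rp = assms(2)
  define E where "E = exp (- \<alpha> * R\<^sup>2)"
  define p where "p = psi \<alpha> R"
  define P where "P = Psi \<alpha> R"
  define h where "h = (\<lambda>s. P s / p s)"
  define I where "I = (\<lambda>t. integral {0..t} h)"
  define IR where "IR = I R"
  have Epos: "E > 0" unfolding E_def by simp
  have E1: "E \<le> 1" unfolding E_def using a by simp
  have p_pos: "p s > 0" for s unfolding p_def psi_def by simp
  have p_le1: "p s \<le> 1" for s unfolding p_def psi_def using a by simp
  have p_ge: "E \<le> p s" for s
  proof -
    have "min (s\<^sup>2) (R\<^sup>2) \<le> R\<^sup>2" by simp
    then have "- \<alpha> * R\<^sup>2 \<le> - \<alpha> * min (s\<^sup>2) (R\<^sup>2)" using a by simp
    then show ?thesis unfolding E_def p_def psi_def by simp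
  qed
  have p_cont: "continuous_on S p" for S unfolding p_def psi_def by (intro continuous_intros)
  have P_eq: "P = (\<lambda>r. integral {0..r} p)" unfolding P_def p_def by (rule ext) (simp add: Psi_def)
  have P_der: "(P has_real_derivative p r) (at r within {0..})" if "r \<ge> 0" for r
    unfolding P_eq by (rule ftc0[OF p_cont that])
  have P_cont: "continuous_on {0..} P" unfolding P_eq by (rule ftc0_cont[OF p_cont])
  have P_lo: "E * r \<le> P r" if "r \<ge> 0" for r
  proof -
    have "integral {0..r} (\<lambda>_. E) \<le> integral {0..r} p"
      by (rule int_mono_cont) (auto intro: p_cont p_ge)
    then show ?thesis using that by (simp add: P_eq mult.commute)
  qed
  have P_hi: "P r \<le> r" if "r \<ge> 0" for r
  proof -
    have "integral {0..r} p \<le> integral {0..r} (\<lambda>_. 1)"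
      by (rule int_mono_cont) (auto intro: p_cont p_le1)
    then show ?thesis using that by (simp add: P_eq)
  qed
  have P_nn: "0 \<le> P r" if "r \<ge> 0" for r using P_lo[OF that] Epos that
    by (meson mult_nonneg_nonneg order.strict_implies_order order_trans)
  have h_cont: "continuous_on {0..} h" unfolding h_def
    by (intro continuous_on_divide P_cont p_cont) (simp add: p_pos less_imp_neq[symmetric])
  have h_lo: "E * s \<le> h s" if "s \<ge> 0" for s
  proof -
    have "P s \<le> P s / p s" using P_nn[OF that] p_pos[of s] p_le1[of s]
      by (simp add: le_divide_eq mult_left_le)
    then show ?thesis unfolding h_def using P_lo[OF that] by linarith
  qed
  have h_hi: "h s \<le> s / E" if "s \<ge> 0" for s
    unfolding h_def using P_nn[OF that] P_hi[OF that] p_ge[of s] Epos that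
    by (intro frac_le) auto
  have h_nn: "0 \<le> h s" if "s \<ge> 0" for s using h_lo[OF that] Epos that
    by (meson mult_nonneg_nonneg order.strict_implies_order order_trans)
  have I_der: "(I has_real_derivative h r) (at r within {0..})" if "r \<ge> 0" for r
    unfolding I_def by (rule ftc0[OF h_cont that])
  have I_cont: "continuous_on {0..} I" unfolding I_def by (rule ftc0_cont[OF h_cont])
  have h_int: "h integrable_on {0..t}" for t
    by (rule integrable_continuous_interval) (auto intro: continuous_on_subset[OF h_cont])
  have IR_lo: "E * R\<^sup>2 / 2 \<le> IR"
  proof -
    have "((\<lambda>s. s * E) has_integral (R\<^sup>2/2 * E)) {0..R}"
      by (rule has_integral_mult_left[OF int_id]) (use Rp in simp)
    then have "integral {0..R} (\<lambda>s. s * E) \<le> integral {0..R} h"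
      by (intro integral_le h_int) (use h_lo in \<open>auto simp: mult.commute\<close>)
    moreover have "integral {0..R} (\<lambda>s. s * E) = R\<^sup>2/2 * E"
      by (rule integral_unique) fact
    ultimately have "R\<^sup>2/2 * E \<le> integral {0..R} h" by linarith
    then show ?thesis unfolding IR_def I_def by (simp add: algebra_simps)
  qed
  have IR_hi: "IR \<le> R\<^sup>2 / (2 * E)"
  proof -
    have "((\<lambda>s. s * (1/E)) has_integral (R\<^sup>2/2 * (1/E))) {0..R}"
      by (rule has_integral_mult_left[OF int_id]) (use Rp in simp)
    then have "integral {0..R} h \<le> integral {0..R} (\<lambda>s. s * (1/E))"
      by (intro integral_le h_int) (auto intro: h_hi)
    moreover have "integral {0..R} (\<lambda>s. s * (1/E)) = R\<^sup>2/2 * (1/E)"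
      by (rule integral_unique) fact
    ultimately have "integral {0..R} h \<le> R\<^sup>2/2 * (1/E)" by linarith
    then show ?thesis unfolding IR_def I_def by (simp add: algebra_simps)
  qed
  have IR_pos: "IR > 0" using IR_lo Epos Rp by (smt (verit) mult_pos_pos zero_less_power divide_pos_pos)
  have I_mono: "0 \<le> I t \<and> I t \<le> IR" if "0 \<le> t" "t \<le> R" for t
  proof
    show "0 \<le> I t" unfolding I_def by (rule integral_nonneg[OF h_int]) (auto intro: h_nn)
    show "I t \<le> IR" unfolding I_def IR_def
      by (rule integral_subset_le) (use that in \<open>auto intro: h_int h_nn\<close>)
  qed

  define g where "g = gfun \<alpha> R"
  have g_eq: "g r = 1 - 1/2 * (I (min r R) / IR)" for r
    unfolding g_def gfun_def I_def IR_def h_def P_def p_def by simp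
  have g_bd: "1/2 \<le> g r \<and> g r \<le> 1" if "r \<ge> 0" for r
  proof -
    have "0 \<le> I (min r R)" "I (min r R) \<le> IR" using I_mono[of "min r R"] that Rp by auto
    then have "0 \<le> I (min r R) / IR" "I (min r R) / IR \<le> 1" using IR_pos by auto
    then show ?thesis unfolding g_eq by simp
  qed
  have g_cont: "continuous_on {0..} g"
  proof -
    have "continuous_on {0..} (\<lambda>r. I (min r R))"
      by (rule continuous_on_compose2[OF I_cont]) (use Rp in \<open>auto intro!: continuous_intros\<close>)
    then have "continuous_on {0..} (\<lambda>r. 1 - 1/2 * (I (min r R) / IR))"
      by (intro continuous_intros) (use IR_pos in auto)
    moreover have "g = (\<lambda>r. 1 - 1/2 * (I (min r R) / IR))" by (rule ext) (rule g_eq)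
    ultimately show ?thesis by simp
  qed
  define f' where "f' = (\<lambda>r. p r * g r)"
  have f'_cont: "continuous_on {0..} f'" unfolding f'_def by (intro continuous_intros p_cont g_cont)
  define F where "F = ff \<alpha> R"
  have F_eq: "F = (\<lambda>r. integral {0..r} f')" unfolding F_def f'_def p_def g_def
    by (rule ext) (simp add: ff_def)
  define f'' where "f'' = (\<lambda>r. if r \<le> R then -2*\<alpha>*r*p r*g r - P r/(2*IR) else 0)"
  have D1: "(F has_real_derivative f' r) (at r within {0..})" if "r \<ge> 0" for r
    unfolding F_eq by (rule ftc0[OF f'_cont that])
  have p_in: "p x = exp (-\<alpha>*x\<^sup>2)" if "0 \<le> x" "x \<le> R" for x
  proof -
    have "x\<^sup>2 \<le> R\<^sup>2" using that by (intro power_mono) auto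
    then show ?thesis unfolding p_def psi_def by simp
  qed
  have p_out: "p x = E" if "R \<le> x" for x
  proof -
    have "R\<^sup>2 \<le> x\<^sup>2" using that Rp by (intro power_mono) auto
    then show ?thesis unfolding p_def psi_def E_def by simp
  qed
  have D2a: "(f' has_real_derivative f'' r) (at r within {0..R})" if "0 \<le> r" "r \<le> R" for r
  proof -
    have e: "((\<lambda>x. exp (-\<alpha>*x\<^sup>2)) has_real_derivative exp (-\<alpha>*r\<^sup>2) * (-\<alpha>*(2*r))) (at r)"
      by (auto intro!: derivative_eq_intros)
    have pd: "(p has_real_derivative exp (-\<alpha>*r\<^sup>2) * (-\<alpha>*(2*r))) (at r within {0..R})"
      by (rule has_field_derivative_transform_within[OF DERIV_subset[OF e] zero_less_one])
        (use that p_in in auto)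
    have i: "((\<lambda>x. 1 - 1/2 * (I x / IR)) has_real_derivative -(1/2)*(h r/IR)) (at r within {0..R})"
      using DERIV_subset[OF I_der[OF that(1)], of "{0..R}"] IR_pos by (auto intro!: derivative_eq_intros)
    have gd: "(g has_real_derivative -(1/2)*(h r/IR)) (at r within {0..R})"
      by (rule has_field_derivative_transform_within[OF i zero_less_one])
        (use that g_eq in auto)
    have "(f' has_real_derivative exp (-\<alpha>*r\<^sup>2) * (-\<alpha>*(2*r)) * g r + -(1/2)*(h r/IR) * p r) (at r within {0..R})"
      unfolding f'_def by (rule DERIV_mult[OF pd gd])
    moreover have "exp (-\<alpha>*r\<^sup>2) * (-\<alpha>*(2*r)) * g r + -(1/2)*(h r/IR) * p r = f'' r"
      using that p_in[OF that] p_pos[of r] IR_pos unfolding f''_def h_def by (simp add: field_simps)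
    ultimately show ?thesis by simp
  qed
  have D2b: "(f' has_real_derivative f'' r) (at r within {R..})" if "R < r" for r
  proof -
    have "f' x = E/2" if "x \<in> {R..}" for x
    proof -
      have "g x = 1/2" unfolding g_eq using that IR_pos by (simp add: IR_def)
      then show ?thesis unfolding f'_def using p_out[of x] that by simp
    qed
    moreover have "f'' r = 0" unfolding f''_def using that by simp
    ultimately show ?thesis
      using has_field_derivative_transform_within[OF DERIV_const[of "E/2" "at r within {R..}"] zero_less_one, of f']
      using that by auto
  qed
  have D2: "(f' has_real_derivative f'' r) (at r within (if r \<le> R then {0..R} else {R..}))" if "r \<ge> 0" for r
    using D2a D2b that by auto
  have F0: "F 0 = 0" unfolding F_eq by simp
  have f'0: "f' 0 = 1" unfolding f'_def g_eq using Rp by (simp add: p_def psi_def I_def)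
  have F2: "(1/2) * E \<le> (1/2) * p r \<and> (1/2) * p r \<le> f' r \<and> f' r \<le> 1" if "r \<ge> 0" for r
    using p_ge[of r] g_bd[OF that] p_pos[of r] p_le1[of r] unfolding f'_def
    by (auto intro: mult_left_mono mult_le_one)
  have f'_lo: "E/2 \<le> f' r" if "r \<ge> 0" for r using F2[OF that] by simp
  have F3: "(1/2) * E * r \<le> (1/2) * P r \<and> (1/2) * P r \<le> F r \<and> F r \<le> P r \<and> P r \<le> r" if "r \<ge> 0" for r
  proof -
    have "integral {0..r} (\<lambda>s. p s * (1/2)) \<le> integral {0..r} f'"
      by (rule int_mono_cont) (use F2 in \<open>auto intro: continuous_on_subset[OF f'_cont] continuous_intros p_cont\<close>)
    moreover have "integral {0..r} f' \<le> integral {0..r} p"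
      by (rule int_mono_cont) (use F2 g_bd p_pos in \<open>auto intro: continuous_on_subset[OF f'_cont[unfolded f'_def]] p_cont simp: f'_def mult_left_le\<close>)
    ultimately show ?thesis using P_lo[OF that] P_hi[OF that] unfolding F_eq P_eq by auto
  qed
  have F4: "f'' r + \<alpha> * r * f' r \<le> - (E / R\<^sup>2) * F r" if "0 \<le> r" "r \<le> R" for r
  proof -
    have gp: "0 \<le> \<alpha> * r * p r * g r" using a that p_pos[of r] g_bd[of r] by simp
    have "f'' r + \<alpha> * r * f' r = - (\<alpha> * r * p r * g r) - P r/(2*IR)"
      unfolding f''_def f'_def using that by (simp add: algebra_simps)
    also have "\<dots> \<le> - (P r/(2*IR))" using gp by simp
    also have "P r * E / R\<^sup>2 \<le> P r / (2*IR)"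
    proof -
      have "2 * IR * E \<le> R\<^sup>2" using IR_hi Epos by (simp add: field_simps)
      then show ?thesis using P_nn[OF that(1)] IR_pos Rp Epos
        apply (simp add: field_simps)
        using mult_left_mono[of "E * (IR * 2)" "R\<^sup>2" "P r"] by (simp add: algebra_simps)
    qed
    then have "- (P r/(2*IR)) \<le> - (P r * E / R\<^sup>2)" by simp
    also have "\<dots> \<le> - (E / R\<^sup>2) * F r"
    proof -
      have "F r * E / R\<^sup>2 \<le> P r * E / R\<^sup>2" using F3[OF that(1)] Epos
        by (intro divide_right_mono mult_right_mono) auto
      then show ?thesis by (simp add: mult.commute)
    qed
    finally show ?thesis .
  qed
  have F5: "f'' r \<le> 0" if "r \<ge> 0" for r
  proof -
    have "0 \<le> \<alpha> * r * p r * g r" using a that p_pos[of r] g_bd[of r] by simp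
    moreover have "0 \<le> P r/(2*IR)" using P_nn[OF that] IR_pos by simp
    ultimately show ?thesis unfolding f''_def by auto
  qed
  have F6: "F r \<le> exp (- (c * E) / 4) * F ((1 + c) * r)" if "0 < c" "c < 1" "0 \<le> r" for c r
  proof -
    have int: "f' integrable_on {0..(1+c)*r}"
      by (rule integrable_continuous_interval) (auto intro: continuous_on_subset[OF f'_cont])
    have rr: "r \<le> (1+c)*r" using that by (simp add: algebra_simps)
    have "F ((1+c)*r) = F r + integral {r..(1+c)*r} f'"
      unfolding F_eq using Henstock_Kurzweil_Integration.integral_combine[where a=0 and c=r and b="(1+c)*r" and f=f'] int rr that
      by simp
    moreover have "integral {r..(1+c)*r} (\<lambda>_. E/2) \<le> integral {r..(1+c)*r} f'"
      by (rule int_mono_cont) (use that f'_lo in \<open>auto intro: continuous_on_subset[OF f'_cont]\<close>)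
    moreover have "integral {r..(1+c)*r} (\<lambda>_. E/2) = c * r * (E/2)" using rr by (simp add: algebra_simps)
    ultimately have A: "F r + c * r * (E/2) \<le> F ((1+c)*r)" by linarith
    have Fr: "0 \<le> F r" "F r \<le> r" using F3[OF that(3)] P_nn[OF that(3)] by auto
    have "c * F r * (E/2) \<le> c * r * (E/2)" using Fr that Epos by (intro mult_right_mono mult_left_mono) auto
    with A have B: "F r * (1 + c*E/2) \<le> F ((1+c)*r)" by (simp add: algebra_simps)
    define x where "x = c * E"
    have x: "0 \<le> x" "x \<le> 1" unfolding x_def using that Epos E1 by (auto simp: mult_le_one)
    have "1 \<le> (1 - x/4) * (1 + x/2)" using x by (simp add: algebra_simps power2_eq_square) (smt (verit) mult_left_le x)
    also have "\<dots> \<le> exp (- x / 4) * (1 + x/2)"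
      using exp_ge_add_one_self[of "-x/4"] x by (intro mult_right_mono) auto
    finally have C: "1 \<le> exp (- x / 4) * (1 + x/2)" .
    have "F r \<le> F r * (exp (- x / 4) * (1 + x/2))" using C Fr by (simp add: mult_le_cancel_left1)
    also have "\<dots> = exp (- x / 4) * (F r * (1 + c*E/2))" by (simp add: x_def algebra_simps)
    also have "\<dots> \<le> exp (- x / 4) * F ((1+c)*r)" using B by simp
    finally show ?thesis by (simp add: x_def)
  qed
  show ?thesis
    unfolding F_def[symmetric] P_def[symmetric] p_def[symmetric] E_def[symmetric]
    apply (rule exI[of _ f'], rule exI[of _ f''])
    using D1 D2 F0 f'0 F2 F3 F4 F5 F6 p_ge
    by (auto simp: f''_def)
qed

end
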